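(* For every integer $n\ge 1$, $a_n$ equals one plus the number of integer triples $(x,y,z)$ with $y,z\ge1$ and $x\ge 0$ satisfying $$n=2xyz+yz+x+y.$$ Moreover, $$a_n=1+\sum_{0\le j<n}D_{2j+1}(n-j).$$
   Context: For an integer $n\ge1$, $a_n$ denotes the number of integers $x$ with $0\le x\le n-1$ for which there exists a positive integer $h$ with $h\mid x$ and $(2x+1)\mid(2n-2h+1)$ (every positive integer divides $0$). For positive integers $m,N$, $D_m(N)$ denotes the number of positive divisors $d>1$ of $N$ with $d\equiv 1\pmod m$. *)

theory Defs
  imports "HOL-Number_Theory.Number_Theory"
begin

definition a :: "nat \<Rightarrow> nat" where
  "a n = card {x :: int. 0 \<le> x \<and> x \<le> int n - 1 \<and>
     (\<exists>h :: int. h > 0 \<and> h dvd x \<and> (2 * x + 1) dvd (2 * int n - 2 * h + 1))}"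

definition D :: "nat \<Rightarrow> nat \<Rightarrow> nat" where
  "D m N = card {d :: nat. d dvd N \<and> d > 1 \<and> [d = 1] (mod m)}"

end

theory Submission
  imports Defs
begin

definition T :: "nat \<Rightarrow> (int \<times> int \<times> int) set" where
  "T n = {(x, y, z).
             (x::int) \<ge> 0 \<and> (y::int) \<ge> 1 \<and> (z::int) \<ge> 1 \<and> int n = 2 * x * y * z + y * z + x + y}"

lemma trip_bounds:
  fixes x y z :: int
  assumes "x \<ge> 0" "y \<ge> 1" "z \<ge> 1" "n = 2 * x * y * z + y * z + x + y"
  shows "x + y + y * z \<le> n" "y \<le> y * z" "z \<le> y * z"
proof -
  have p: "y * z * (2 * x) \<ge> 0" using assms(1-3) by (intro mult_nonneg_nonneg) auto
  have e: "n = x + y + y * z + y * z * (2 * x)" using assms(4) by (simp add: algebra_simps)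
  show "x + y + y * z \<le> n" using p e by linarith
  have q: "y * (z - 1) \<ge> 0" using assms(2,3) by (intro mult_nonneg_nonneg) auto
  have "y * (z - 1) = y * z - y" by (simp add: right_diff_distrib)
  then show "y \<le> y * z" using q by linarith
  have r: "(y - 1) * z \<ge> 0" using assms(2,3) by (intro mult_nonneg_nonneg) auto
  have "(y - 1) * z = y * z - z" by (simp add: left_diff_distrib)
  then show "z \<le> y * z" using r by linarith
qed

lemma finite_T: "finite (T n)"
proof -
  have "T n \<subseteq> {0..int n} \<times> {0..int n} \<times> {0..int n}"
  proof
    fix t assume "t \<in> T n"
    then obtain x y z where t: "t = (x, y, z)" "x \<ge> 0" "y \<ge> 1" "z \<ge> 1"
      "int n = 2 * x * y * z + y * z + x + y" unfolding T_def by auto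
    have "x \<le> int n \<and> y \<le> int n \<and> z \<le> int n"
      using trip_bounds[OF t(2-5)] t(2-4) by linarith
    then show "t \<in> {0..int n} \<times> {0..int n} \<times> {0..int n}"
      using t(1-4) by simp
  qed
  moreover have "finite ({0..int n} \<times> {0..int n} \<times> {0..int n})" by simp
  ultimately show ?thesis by (rule finite_subset)
qed

lemma dvd_small_zero:
  fixes k d :: int
  assumes "d dvd k" "\<bar>k\<bar> < d"
  shows "k = 0"
proof (rule ccontr)
  assume "k \<noteq> 0"
  then have "\<bar>d\<bar> \<le> \<bar>k\<bar>" using dvd_imp_le_int assms(1) by blast
  then show False using assms(2) by linarith
qed

lemma partA:
  fixes n :: nat
  assumes "n \<ge> 1"
  shows "a n = 1 + card (T n)"
proof -
  define S where "S = {x :: int. 0 \<le> x \<and> x \<le> int n - 1 \<and>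
     (\<exists>h :: int. h > 0 \<and> h dvd x \<and> (2 * x + 1) dvd (2 * int n - 2 * h + 1))}"
  define S' where "S' = S - {0}"
  have finS: "finite S" unfolding S_def by (rule finite_subset[of _ "{0..int n - 1}"]) auto
  have "0 \<in> S" unfolding S_def using assms by (auto intro: exI[of _ 1])
  then have cardS: "card S = 1 + card S'" using card_Suc_Diff1[OF finS] unfolding S'_def by simp
  define f where "f = (\<lambda>(x::int, y::int, z::int). y * z)"
  have inj: "inj_on f (T n)"
  proof (rule inj_onI)
    fix t1 t2 assume t1: "t1 \<in> T n" and t2: "t2 \<in> T n" and eq: "f t1 = f t2"
    obtain x1 y1 z1 where a1: "t1 = (x1, y1, z1)" "x1 \<ge> 0" "y1 \<ge> 1" "z1 \<ge> 1"
      "int n = 2 * x1 * y1 * z1 + y1 * z1 + x1 + y1" using t1 unfolding T_def by auto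
    obtain x2 y2 z2 where a2: "t2 = (x2, y2, z2)" "x2 \<ge> 0" "y2 \<ge> 1" "z2 \<ge> 1"
      "int n = 2 * x2 * y2 * z2 + y2 * z2 + x2 + y2" using t2 unfolding T_def by auto
    define X where "X = y1 * z1"
    have X2: "X = y2 * z2" using eq a1 a2 unfolding f_def X_def by simp
    have e1: "2 * int n - 2 * y1 + 1 = (2 * X + 1) * (2 * x1 + 1)"
      using a1(5) unfolding X_def by (simp add: algebra_simps)
    have e2: "2 * int n - 2 * y2 + 1 = (2 * X + 1) * (2 * x2 + 1)"
      using a2(5) unfolding X2 by (simp add: algebra_simps)
    have "(2 * X + 1) dvd (2 * (y2 - y1))"
    proof -
      have "2 * (y2 - y1) = (2 * X + 1) * (2 * x1 + 1) - (2 * X + 1) * (2 * x2 + 1)"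
        using e1 e2 by (simp add: algebra_simps)
      then show ?thesis by (metis dvd_diff dvd_triv_left)
    qed
    then have d: "(2 * X + 1) dvd (y2 - y1)"
    proof -
      assume h: "(2 * X + 1) dvd (2 * (y2 - y1))"
      have "y2 - y1 = (2 * X + 1) * (y2 - y1) - X * (2 * (y2 - y1))" by (simp add: algebra_simps)
      then show ?thesis using h by (metis dvd_diff dvd_mult dvd_triv_left)
    qed
    have b1: "y1 \<le> X" "y2 \<le> X" using trip_bounds[OF a1(2-5)] trip_bounds[OF a2(2-5)] X2
      unfolding X_def by auto
    have "y2 - y1 = 0" using dvd_small_zero[OF d] b1 a1 a2 by auto
    then have "y1 = y2" by simp
    moreover have "z1 = z2" using X2 \<open>y1 = y2\<close> a1(3) unfolding X_def by simp
    moreover have "x1 = x2"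
    proof -
      have "(2 * X + 1) * (2 * x1 + 1) = (2 * X + 1) * (2 * x2 + 1)" by (metis e1 e2 \<open>y1 = y2\<close>)
      moreover have "2 * X + 1 \<noteq> 0" using b1 a1 by auto
      ultimately have "2 * x1 + 1 = 2 * x2 + 1" by simp
      then show ?thesis by simp
    qed
    ultimately show "t1 = t2" using a1 a2 by simp
  qed
  have img: "f ` T n = S'"
  proof
    show "f ` T n \<subseteq> S'"
    proof
      fix X assume "X \<in> f ` T n"
      then obtain x y z where a1: "X = y * z" "x \<ge> 0" "y \<ge> 1" "z \<ge> 1"
        "int n = 2 * x * y * z + y * z + x + y" unfolding T_def f_def by auto
      have e1: "2 * int n - 2 * y + 1 = (2 * X + 1) * (2 * x + 1)"
        using a1 by (simp add: algebra_simps)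
      have "X \<ge> 1" "X \<le> int n - 1" using trip_bounds[OF a1(2-5)] a1(1-4) by linarith+
      moreover have "(2 * X + 1) dvd (2 * int n - 2 * y + 1)" using e1 by simp
      moreover have "y > 0" "y dvd X" using a1 by auto
      ultimately have "X \<in> S" unfolding S_def mem_Collect_eq
        by (intro conjI exI[of _ y]) auto
      then show "X \<in> S'" unfolding S'_def using \<open>X \<ge> 1\<close> by auto
    qed
    show "S' \<subseteq> f ` T n"
    proof
      fix X assume "X \<in> S'"
      then obtain h where X: "X \<ge> 1" "X \<le> int n - 1" "h > 0" "h dvd X"
        "(2 * X + 1) dvd (2 * int n - 2 * h + 1)" unfolding S'_def S_def by auto
      obtain z where z: "X = h * z" using X by (auto elim: dvdE)
      have hX: "h \<le> X" using X zdvd_imp_le by auto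
      have z1: "z \<ge> 1" using X z
        by (metis int_one_le_iff_zero_less order_less_le_trans zero_less_mult_pos zero_less_one)
      obtain m where m: "2 * int n - 2 * h + 1 = (2 * X + 1) * m" using X by (auto elim: dvdE)
      have "m > 0"
      proof -
        have "2 * int n - 2 * h + 1 > 0" using hX X by simp
        then show ?thesis using m X by (simp add: zero_less_mult_iff)
      qed
      have "odd m"
      proof
        assume "even m"
        then have "even (2 * int n - 2 * h + 1)" using m by simp
        then show False by simp
      qed
      then obtain x where x: "m = 2 * x + 1" by (auto elim: oddE)
      have x0: "x \<ge> 0" using \<open>m > 0\<close> x by simp
      have "2 * int n = 2 * (2 * x * h * z + h * z + x + h)"
        using m x z by (simp add: algebra_simps)
      then have "int n = 2 * x * h * z + h * z + x + h" by simp
      then have "(x, h, z) \<in> T n" unfolding T_def using x0 X z1 by auto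
      moreover have "f (x, h, z) = X" unfolding f_def using z by simp
      ultimately show "X \<in> f ` T n" by force
    qed
  qed
  have "card (T n) = card S'" using card_image[OF inj] img by simp
  then show ?thesis unfolding a_def S_def[symmetric] using cardS by simp
qed

lemma cardTj:
  fixes n j :: nat
  assumes jn: "j < n"
  shows "card {t \<in> T n. fst t = int j} = D (2 * j + 1) (n - j)"
proof -
  define m where "m = 2 * j + 1"
  have m0: "m > 0" unfolding m_def by simp
  define Ds where "Ds = {d :: nat. d dvd (n - j) \<and> d > 1 \<and> [d = 1] (mod m)}"
  define g where "g = (\<lambda>d::nat. (int j, int ((n - j) div d), int ((d - 1) div m)))"
  have mdvd: "m dvd (d - 1)" if "d \<in> Ds" for d
    using that cong_altdef_nat[of 1 d m] unfolding Ds_def by auto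
  have inj: "inj_on g Ds"
  proof (rule inj_onI)
    fix d1 d2 assume d1: "d1 \<in> Ds" and d2: "d2 \<in> Ds" and eq: "g d1 = g d2"
    have "(d1 - 1) div m = (d2 - 1) div m" using eq unfolding g_def by simp
    then have "m * ((d1 - 1) div m) = m * ((d2 - 1) div m)" by simp
    then have "d1 - 1 = d2 - 1" using mdvd[OF d1] mdvd[OF d2] by (metis dvd_mult_div_cancel)
    moreover have "d1 > 1" "d2 > 1" using d1 d2 unfolding Ds_def by auto
    ultimately show "d1 = d2" by simp
  qed
  have img: "g ` Ds = {t \<in> T n. fst t = int j}"
  proof
    show "g ` Ds \<subseteq> {t \<in> T n. fst t = int j}"
    proof
      fix t assume "t \<in> g ` Ds"
      then obtain d where d: "d \<in> Ds" "t = g d" by auto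
      have d1: "d > 1" and ddvd: "d dvd (n - j)" using d unfolding Ds_def by auto
      obtain q where q: "n - j = d * q" using ddvd by (auto elim: dvdE)
      obtain w where w: "d - 1 = m * w" using mdvd[OF d(1)] by (auto elim: dvdE)
      have q1: "q \<ge> 1" using q jn by (cases q) auto
      have w1: "w \<ge> 1" using w d1 by (cases w) auto
      have qd: "(n - j) div d = q" using q d1 by simp
      have wd: "(d - 1) div m = w" using w m0 by simp
      have dd: "d = 1 + m * w" using w d1 by simp
      have "n = j + (1 + m * w) * q" using q dd jn by simp
      also have "\<dots> = 2 * j * q * w + q * w + j + q" unfolding m_def by (simp add: algebra_simps)
      finally have "int n = int (2 * j * q * w + q * w + j + q)" by simp
      then have "int n = 2 * int j * int q * int w + int q * int w + int j + int q" by simp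
      then have "(int j, int q, int w) \<in> T n" unfolding T_def using q1 w1 by auto
      moreover have "t = (int j, int q, int w)" using d(2) qd wd unfolding g_def by simp
      ultimately show "t \<in> {t \<in> T n. fst t = int j}" by simp
    qed
    show "{t \<in> T n. fst t = int j} \<subseteq> g ` Ds"
    proof
      fix t assume "t \<in> {t \<in> T n. fst t = int j}"
      then obtain y z where t: "t = (int j, y, z)" "y \<ge> 1" "z \<ge> 1"
        "int n = 2 * int j * y * z + y * z + int j + y" unfolding T_def by auto
      define q where "q = nat y"
      define w where "w = nat z"
      have yq: "y = int q" and zw: "z = int w" using t unfolding q_def w_def by auto
      have q1: "q \<ge> 1" and w1: "w \<ge> 1" using t yq zw by auto
      have "int n = int (2 * j * q * w + q * w + j + q)" using t(4) yq zw by simp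
      then have nq: "n = 2 * j * q * w + q * w + j + q" by (simp only: of_nat_eq_iff)
      define d where "d = 1 + m * w"
      have nd: "n - j = d * q" unfolding d_def m_def using nq by (simp add: algebra_simps)
      have d1: "d > 1" unfolding d_def using m0 w1 by simp
      have "[d = 1] (mod m)" using cong_altdef_nat[of 1 d m] d1 unfolding d_def by simp
      then have dD: "d \<in> Ds" unfolding Ds_def using nd d1 by simp
      have "(n - j) div d = q" using nd d1 by simp
      moreover have "(d - 1) div m = w" unfolding d_def using m0 by simp
      ultimately have "g d = t" unfolding g_def using t(1) yq zw by simp
      then show "t \<in> g ` Ds" using dD by blast
    qed
  qed
  have "card (g ` Ds) = card Ds" by (rule card_image[OF inj])
  then show ?thesis using img unfolding D_def Ds_def m_def by simp
qed

lemma partB: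
  fixes n :: nat
  shows "card (T n) = (\<Sum>j<n. D (2 * j + 1) (n - j))"
proof -
  define A where "A = (\<lambda>j::nat. {t \<in> T n. fst t = int j})"
  have U: "T n = (\<Union>j\<in>{..<n}. A j)"
  proof
    show "T n \<subseteq> (\<Union>j\<in>{..<n}. A j)"
    proof
      fix t assume tT: "t \<in> T n"
      then obtain x y z where t: "t = (x, y, z)" "x \<ge> 0" "y \<ge> 1" "z \<ge> 1"
        "int n = 2 * x * y * z + y * z + x + y" unfolding T_def by auto
      have "x < int n" using trip_bounds[OF t(2-5)] t(2-4) by linarith
      then have "nat x < n" "int (nat x) = x" using t(2) by auto
      then have "t \<in> A (nat x)" unfolding A_def using tT t(1) by simp
      then show "t \<in> (\<Union>j\<in>{..<n}. A j)" using \<open>nat x < n\<close> by blast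
    qed
    show "(\<Union>j\<in>{..<n}. A j) \<subseteq> T n" unfolding A_def by auto
  qed
  have "card (\<Union>j\<in>{..<n}. A j) = (\<Sum>j<n. card (A j))"
  proof (rule card_UN_disjoint)
    show "finite {..<n}" by simp
    show "\<forall>i\<in>{..<n}. finite (A i)" unfolding A_def using finite_T by auto
    show "\<forall>i\<in>{..<n}. \<forall>j\<in>{..<n}. i \<noteq> j \<longrightarrow> A i \<inter> A j = {}" unfolding A_def by auto
  qed
  also have "\<dots> = (\<Sum>j<n. D (2 * j + 1) (n - j))"
    by (rule sum.cong) (auto simp: A_def cardTj)
  finally show ?thesis using U by simp
qed

theorem theorem11:
  fixes n :: nat
  assumes "n \<ge> 1"
  shows "a n = 1 + card {(x, y, z).
             (x::int) \<ge> 0 \<and> (y::int) \<ge> 1 \<and> (z::int) \<ge> 1 \<and> int n = 2 * x * y * z + y * z + x + y}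
       \<and> a n = 1 + (\<Sum>j<n. D (2 * j + 1) (n - j))"
  using partA[OF assms] partB[of n] unfolding T_def by simp

end
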